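(* Let $A\to X\to Y\to B$ be a Markov chain of random variables on finite sets, $f:[0,\infty)\to\mathbb{R}$ convex with $f(1)=0$, and $G$ an increasing convex function on $[0,\infty)$. Then $I_{G,f}(A;B)\le I_{G,f}(X;Y)$.
   Context: $D_f(p\|q)=\sum_y q(y) f(p(y)/q(y))$ with $0f(0/0)=0$. $I_{G,f}(U;V)=\min_{q_V}\sum_u p_U(u)\,G(D_f(p_{V|U=u}\|q_V))$, minimum over distributions on the alphabet of $V$. *)

theory Defs
  imports "HOL-Probability.Probability"
begin

text \<open>Slope at infinity f'(\<infinity>) = lim_{t\<rightarrow>\<infinity>} f(t)/t (exists in (-\<infinity>,\<infinity>] for convex f),
  used for the standard convention 0 f(a/0) = a f'(\<infinity>) when a > 0.\<close>
definition slope_inf :: "(real \<Rightarrow> real) \<Rightarrow> ereal" where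
  "slope_inf f = Liminf at_top (\<lambda>t. ereal (f t / t))"

definition fdiv :: "(real \<Rightarrow> real) \<Rightarrow> ('v::finite \<Rightarrow> real) \<Rightarrow> ('v \<Rightarrow> real) \<Rightarrow> ereal" where
  "fdiv f p q = (\<Sum>y\<in>UNIV.
     (if q y = 0 then (if p y = 0 then 0 else ereal (p y) * slope_inf f)
      else ereal (q y * f (p y / q y))))"

text \<open>Extension of G to [0,\<infinity>] by G(\<infinity>) = lim_{t\<rightarrow>\<infinity>} G(t) (sup, G increasing).\<close>
definition Gext :: "(real \<Rightarrow> real) \<Rightarrow> ereal \<Rightarrow> ereal" where
  "Gext G x = (case x of ereal r \<Rightarrow> ereal (G r)
                | PInfty \<Rightarrow> (SUP t\<in>{0..}. ereal (G t))
                | MInfty \<Rightarrow> ereal (G 0))"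

definition margU :: "('u \<times> 'v) pmf \<Rightarrow> 'u pmf" where "margU J = map_pmf fst J"

definition condV :: "('u \<times> 'v) pmf \<Rightarrow> 'u \<Rightarrow> 'v \<Rightarrow> real" where
  "condV J u v = pmf J (u, v) / pmf (margU J) u"

text \<open>I_{G,f}(U;V) = min over q_V of sum_u p_U(u) G(D_f(p_{V|U=u} || q_V)).
  The minimum is attained (lower semicontinuity on the compact simplex), so it equals the infimum.\<close>
definition IGf :: "(real \<Rightarrow> real) \<Rightarrow> (real \<Rightarrow> real) \<Rightarrow> ('u::finite \<times> 'v::finite) pmf \<Rightarrow> ereal" where
  "IGf G f J = (INF q\<in>(UNIV :: 'v pmf set).
      \<Sum>u\<in>UNIV. ereal (pmf (margU J) u) * Gext G (fdiv f (condV J u) (pmf q)))"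

end

theory Submission
  imports Defs
begin

lemma chord_le:
  fixes f :: "real \<Rightarrow> real"
  assumes cf: "convex_on {0..} f" and x: "0 \<le> x" and d: "0 < d" and t: "x + d \<le> t"
  shows "f x + (f (x+d) - f x) / d * (t - x) \<le> f t"
proof -
  define \<mu> where "\<mu> = d / (t - x)"
  have tx: "t - x > 0" using d t by linarith
  have mu0: "0 \<le> \<mu>" "\<mu> \<le> 1" using tx d t by (auto simp: \<mu>_def field_simps)
  have mt: "\<mu> * (t - x) = d" using tx by (simp add: \<mu>_def)
  have eq: "(1 - \<mu>) * x + \<mu> * t = x + d" using mt by (simp add: algebra_simps)
  have "f ((1 - \<mu>) *\<^sub>R x + \<mu> *\<^sub>R t) \<le> (1 - \<mu>) * f x + \<mu> * f t"
    using convex_onD[OF cf, of \<mu> x t] mu0 x t d by auto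
  hence "f (x + d) \<le> (1 - \<mu>) * f x + \<mu> * f t" using eq by simp
  hence "f (x + d) - f x \<le> \<mu> * (f t - f x)" by (simp add: algebra_simps)
  hence "(f (x + d) - f x) / d \<le> (f t - f x) / (t - x)" using tx d
    by (simp add: \<mu>_def field_simps)
  thus ?thesis using tx by (simp add: field_simps)
qed

lemma slope_ge:
  fixes f :: "real \<Rightarrow> real"
  assumes cf: "convex_on {0..} f" and x: "0 \<le> x" and d: "0 < d"
  shows "ereal ((f (x+d) - f x) / d) \<le> slope_inf f"
  unfolding slope_inf_def le_Liminf_iff
proof (intro allI impI)
  fix y assume y: "y < ereal ((f (x+d) - f x) / d)"
  define m where "m = (f (x+d) - f x) / d"
  define c where "c = f x - m * x"
  show "\<forall>\<^sub>F t in at_top. y < ereal (f t / t)"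
  proof (cases y)
    case (real r)
    have rm: "r < m" using y real by (simp add: m_def)
    have "((\<lambda>t. m + c / t) \<longlongrightarrow> m + 0) at_top"
      by (intro tendsto_add tendsto_const tendsto_divide_0[OF tendsto_const]
          filterlim_at_top_imp_at_infinity filterlim_ident)
    hence "\<forall>\<^sub>F t in at_top. r < m + c / t" using rm by (simp add: order_tendsto_iff)
    moreover have "\<forall>\<^sub>F t in at_top. x + d \<le> t \<and> 0 < t"
      using eventually_ge_at_top[of "x+d"] eventually_gt_at_top[of 0] eventually_conj by blast
    ultimately show ?thesis
    proof eventually_elim
      case (elim t)
      have "f x + m * (t - x) \<le> f t" using chord_le[OF cf x d, of t] elim by (simp add: m_def)
      hence "m * t + c \<le> f t" by (simp add: c_def algebra_simps)
      hence "(m * t + c) / t \<le> f t / t" using elim by (intro divide_right_mono) auto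
      hence "m + c / t \<le> f t / t" using elim by (simp add: add_divide_distrib)
      thus ?case using elim real by simp
    qed
  qed (use y in auto)
qed

lemma slope_not_minf:
  fixes f :: "real \<Rightarrow> real"
  assumes cf: "convex_on {0..} f"
  shows "slope_inf f \<noteq> -\<infinity>"
  using slope_ge[OF cf, of 0 1] by auto


definition persp :: "(real \<Rightarrow> real) \<Rightarrow> real \<Rightarrow> real \<Rightarrow> ereal" where
  "persp f p q = (if q = 0 then (if p = 0 then 0 else ereal p * slope_inf f)
      else ereal (q * f (p / q)))"

lemma fdiv_persp: "fdiv f p q = (\<Sum>y\<in>UNIV. persp f (p y) (q y))"
  by (simp add: fdiv_def persp_def)

lemma persp_not_minf:
  assumes cf: "convex_on {0..} f" and p: "0 \<le> p"
  shows "persp f p q \<noteq> -\<infinity>"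
  using slope_not_minf[OF cf] p
  by (cases "slope_inf f") (auto simp: persp_def)

lemma persp_hom:
  assumes c: "0 \<le> c"
  shows "persp f (c*p) (c*q) = ereal c * persp f p q"
proof (cases "c = 0")
  case True thus ?thesis by (simp add: persp_def zero_ereal_def[symmetric])
next
  case False
  thus ?thesis
    by (auto simp: persp_def mult.assoc times_ereal.simps(1)[symmetric] simp del: times_ereal.simps(1))
qed

lemma persp_aux:
  assumes cf: "convex_on {0..} f" and q1: "0 < q1" and p1: "0 \<le> p1" and p2: "0 \<le> p2"
  shows "persp f (p1 + p2) q1 \<le> persp f p1 q1 + persp f p2 0"
proof (cases "p2 = 0")
  case True thus ?thesis by (simp add: persp_def)
next
  case False
  hence p2': "0 < p2" using p2 by simp
  show ?thesis
  proof (cases "slope_inf f")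
    case (real \<sigma>)
    define x where "x = p1 / q1"
    define d where "d = p2 / q1"
    have x0: "0 \<le> x" using p1 q1 by (simp add: x_def)
    have d0: "0 < d" using p2' q1 by (simp add: d_def)
    have "ereal ((f (x+d) - f x) / d) \<le> ereal \<sigma>" using slope_ge[OF cf x0 d0] real by simp
    hence "(f (x+d) - f x) / d \<le> \<sigma>" by simp
    hence "f (x+d) - f x \<le> d * \<sigma>" using d0 by (simp add: field_simps)
    hence "q1 * (f (x+d) - f x) \<le> q1 * (d * \<sigma>)" using q1 by (intro mult_left_mono) auto
    hence "q1 * f (x+d) \<le> q1 * f x + p2 * \<sigma>" using q1 by (simp add: d_def algebra_simps)
    moreover have "x + d = (p1 + p2) / q1" by (simp add: x_def d_def add_divide_distrib)
    ultimately show ?thesis using q1 False real by (simp add: persp_def x_def)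
  next
    case PInf thus ?thesis using q1 False p2' by (simp add: persp_def)
  next
    case MInf thus ?thesis using slope_not_minf[OF cf] by simp
  qed
qed

lemma persp_subadd:
  assumes cf: "convex_on {0..} f" and p1: "0 \<le> p1" and p2: "0 \<le> p2" and q1: "0 \<le> q1" and q2: "0 \<le> q2"
  shows "persp f (p1 + p2) (q1 + q2) \<le> persp f p1 q1 + persp f p2 q2"
proof -
  consider "q1 = 0" "q2 = 0" | "0 < q1" "q2 = 0" | "q1 = 0" "0 < q2" | "0 < q1" "0 < q2"
    using q1 q2 by linarith
  thus ?thesis
  proof cases
    case 1
    show ?thesis
    proof (cases "p1 = 0 \<or> p2 = 0")
      case True thus ?thesis using 1 by (auto simp: persp_def)
    next
      case False
      hence "p1 + p2 \<noteq> 0" using p1 p2 by linarith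
      thus ?thesis using 1 False p1 p2
        by (simp add: persp_def ereal_left_distrib[symmetric])
    qed
  next
    case 2 thus ?thesis using persp_aux[OF cf _ p1 p2] by simp
  next
    case 3 thus ?thesis using persp_aux[OF cf _ p2 p1, of q2] by (simp add: add.commute)
  next
    case 4
    define \<mu> where "\<mu> = q2 / (q1 + q2)"
    have mu: "0 \<le> \<mu>" "\<mu> \<le> 1" using 4 by (auto simp: \<mu>_def)
    have "f ((1 - \<mu>) *\<^sub>R (p1/q1) + \<mu> *\<^sub>R (p2/q2)) \<le> (1 - \<mu>) * f (p1/q1) + \<mu> * f (p2/q2)"
      using convex_onD[OF cf mu, of "p1/q1" "p2/q2"] p1 p2 4 by simp
    moreover have m1: "1 - \<mu> = q1 / (q1 + q2)" using 4 by (simp add: \<mu>_def field_simps)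
    moreover have "(1 - \<mu>) *\<^sub>R (p1/q1) + \<mu> *\<^sub>R (p2/q2) = (p1 + p2) / (q1 + q2)"
    proof -
      have "(1 - \<mu>) * (p1/q1) = p1 / (q1 + q2)" using 4 m1 by simp
      moreover have "\<mu> * (p2/q2) = p2 / (q1 + q2)" using 4 by (simp add: \<mu>_def)
      ultimately show ?thesis by (simp add: add_divide_distrib)
    qed
    ultimately have "f ((p1 + p2) / (q1 + q2)) \<le> q1 / (q1 + q2) * f (p1/q1) + q2 / (q1 + q2) * f (p2/q2)"
      by (simp add: \<mu>_def)
    hence "(q1 + q2) * f ((p1 + p2) / (q1 + q2)) \<le> (q1 + q2) * (q1 / (q1 + q2) * f (p1/q1) + q2 / (q1 + q2) * f (p2/q2))"
      using 4 by (intro mult_left_mono) auto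
    also have "\<dots> = q1 * f (p1/q1) + q2 * f (p2/q2)" using 4 by (simp add: distrib_left)
    finally show ?thesis using 4 by (simp add: persp_def)
  qed
qed

lemma persp_sum:
  assumes cf: "convex_on {0..} f" and fin: "finite I"
    and a: "\<And>i. i \<in> I \<Longrightarrow> 0 \<le> a i" and b: "\<And>i. i \<in> I \<Longrightarrow> 0 \<le> b i"
  shows "persp f (\<Sum>i\<in>I. a i) (\<Sum>i\<in>I. b i) \<le> (\<Sum>i\<in>I. persp f (a i) (b i))"
  using fin a b
proof (induction I rule: finite_induct)
  case empty thus ?case by (simp add: persp_def)
next
  case (insert i I)
  have "persp f (\<Sum>i\<in>insert i I. a i) (\<Sum>i\<in>insert i I. b i)
      = persp f (a i + (\<Sum>i\<in>I. a i)) (b i + (\<Sum>i\<in>I. b i))" using insert by simp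
  also have "\<dots> \<le> persp f (a i) (b i) + persp f (\<Sum>i\<in>I. a i) (\<Sum>i\<in>I. b i)"
    using insert by (intro persp_subadd[OF cf]) (auto intro: sum_nonneg)
  also have "\<dots> \<le> persp f (a i) (b i) + (\<Sum>i\<in>I. persp f (a i) (b i))"
    using insert by (intro add_left_mono) auto
  also have "\<dots> = (\<Sum>i\<in>insert i I. persp f (a i) (b i))" using insert by simp
  finally show ?case .
qed

lemma fdiv_nonneg:
  fixes p q :: "'v::finite \<Rightarrow> real"
  assumes cf: "convex_on {0..} f" and f1: "f 1 = 0"
    and p: "\<And>y. 0 \<le> p y" and q: "\<And>y. 0 \<le> q y" and sp: "sum p UNIV = 1" and sq: "sum q UNIV = 1"
  shows "0 \<le> fdiv f p q"
proof -
  have "persp f (sum p UNIV) (sum q UNIV) \<le> fdiv f p q"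
    unfolding fdiv_persp by (intro persp_sum[OF cf]) (auto simp: p q)
  thus ?thesis using sp sq f1 by (simp add: persp_def zero_ereal_def)
qed


lemma Gext_mono:
  assumes Gm: "mono_on {0..} G" and d: "0 \<le> d" and de: "d \<le> e"
  shows "Gext G d \<le> Gext G e"
proof (cases d)
  case (real r)
  have r0: "0 \<le> r" using d real by simp
  show ?thesis
  proof (cases e)
    case (real s)
    have "r \<le> s" using de real \<open>d = ereal r\<close> by simp
    hence "G r \<le> G s" using mono_onD[OF Gm] r0 by auto
    thus ?thesis using real \<open>d = ereal r\<close> by (simp add: Gext_def)
  next
    case PInf
    thus ?thesis using \<open>d = ereal r\<close> r0 by (auto simp: Gext_def intro!: SUP_upper)
  next
    case MInf thus ?thesis using de d by simp
  qed
next
  case PInf thus ?thesis using de by simp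
next
  case MInf thus ?thesis using d by simp
qed

lemma Gext_not_minf: "Gext G d \<noteq> -\<infinity>"
proof (cases d)
  case PInf
  have "ereal (G 0) \<le> (SUP t\<in>{0..}. ereal (G t))" by (rule SUP_upper) auto
  thus ?thesis using PInf by (auto simp: Gext_def)
qed (auto simp: Gext_def)

lemma G_unbounded:
  fixes G :: "real \<Rightarrow> real"
  assumes Gc: "convex_on {0..} G" and s: "0 < s" and Gs: "G 0 < G s"
  shows "(SUP t\<in>{0..}. ereal (G t)) = \<infinity>"
proof -
  define k where "k = (G s - G 0) / s"
  have k: "0 < k" using s Gs by (simp add: k_def)
  have ch: "G 0 + k * t \<le> G t" if "s \<le> t" for t
    using chord_le[OF Gc order_refl s, of t] that by (simp add: k_def)
  have "\<exists>i\<in>{0..}. x < ereal (G i)" if "x < \<top>" for x :: ereal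
  proof (cases x)
    case (real M)
    define t where "t = max s ((M - G 0) / k + 1)"
    have ts: "s \<le> t" by (simp add: t_def)
    have "(M - G 0) / k + 1 \<le> t" by (simp add: t_def)
    hence "k * ((M - G 0) / k + 1) \<le> k * t" using k by (intro mult_left_mono) auto
    hence "M - G 0 + k \<le> k * t" using k by (simp add: distrib_left)
    hence "M < G t" using ch[OF ts] k by linarith
    moreover have "0 \<le> t" using ts s by linarith
    ultimately show ?thesis using real by auto
  next
    case MInf thus ?thesis by (intro bexI[of _ 0]) auto
  qed (use that in auto)
  hence "(SUP t\<in>{0..}. ereal (G t)) = \<top>" by (subst SUP_eq_top_iff) blast
  thus ?thesis by (simp add: top_ereal_def)
qed

lemma Gext_jensen:
  fixes G :: "real \<Rightarrow> real" and w :: "'i \<Rightarrow> real" and d :: "'i \<Rightarrow> ereal"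
  assumes Gm: "mono_on {0..} G" and Gc: "convex_on {0..} G" and fin: "finite I"
    and w: "\<And>i. i \<in> I \<Longrightarrow> 0 < w i" and sw: "sum w I = 1" and d: "\<And>i. i \<in> I \<Longrightarrow> 0 \<le> d i"
  shows "Gext G (\<Sum>i\<in>I. ereal (w i) * d i) \<le> (\<Sum>i\<in>I. ereal (w i) * Gext G (d i))"
proof (cases "\<forall>t\<ge>0. G t = G 0")
  case True
  have ge: "Gext G e = ereal (G 0)" if "0 \<le> e" for e
  proof (cases e)
    case PInf
    have "(SUP t\<in>{0..}. ereal (G t)) = ereal (G 0)"
    proof (rule antisym)
      show "(SUP t\<in>{0..}. ereal (G t)) \<le> ereal (G 0)"
      proof (rule SUP_least)
        fix t :: real assume "t \<in> {0..}"
        hence "G t = G 0" using True by blast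
        thus "ereal (G t) \<le> ereal (G 0)" by simp
      qed
      show "ereal (G 0) \<le> (SUP t\<in>{0..}. ereal (G t))" by (rule SUP_upper) auto
    qed
    thus ?thesis using PInf by (simp add: Gext_def)
  next
    case (real r)
    hence "0 \<le> r" using that by simp
    hence "G r = G 0" using True by blast
    thus ?thesis using real by (simp add: Gext_def)
  qed (use that in auto)
  have s0: "0 \<le> (\<Sum>i\<in>I. ereal (w i) * d i)"
    using w d by (intro sum_nonneg ereal_0_le_mult) (auto simp: less_imp_le)
  have "(\<Sum>i\<in>I. ereal (w i) * Gext G (d i)) = (\<Sum>i\<in>I. ereal (w i * G 0))"
    using ge d by (intro sum.cong) auto
  also have "\<dots> = ereal (G 0)" using sw by (simp add: sum_distrib_right[symmetric])
  finally show ?thesis using ge[OF s0] by simp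
next
  case False
  then obtain s where s: "0 \<le> s" "G s \<noteq> G 0" by auto
  have "G 0 \<le> G s" using mono_onD[OF Gm, of 0 s] s by auto
  hence Gs: "G 0 < G s" using s by simp
  hence s0: "0 < s" using s by (cases "s = 0") auto
  have inf: "Gext G \<infinity> = \<infinity>" using G_unbounded[OF Gc s0 Gs] by (simp add: Gext_def)
  show ?thesis
  proof (cases "\<exists>j\<in>I. d j = \<infinity>")
    case True
    then obtain j where j: "j \<in> I" "d j = \<infinity>" by auto
    have "ereal (w j) * Gext G (d j) = \<infinity>" using j w[of j] inf by simp
    hence "(\<Sum>i\<in>I. ereal (w i) * Gext G (d i)) = \<infinity>" using j fin by (subst sum_Pinfty) auto
    thus ?thesis by simp
  next
    case False
    define r where "r i = real_of_ereal (d i)" for i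
    have dr: "d i = ereal (r i)" if "i \<in> I" for i
      using False d[OF that] that unfolding r_def by (cases "d i") auto
    have r0: "0 \<le> r i" if "i \<in> I" for i using d[OF that] dr[OF that] by simp
    have "(\<Sum>i\<in>I. ereal (w i) * d i) = ereal (\<Sum>i\<in>I. w i * r i)"
      using dr by (simp add: sum_ereal[symmetric] del: sum_ereal)
    moreover have "(\<Sum>i\<in>I. ereal (w i) * Gext G (d i)) = ereal (\<Sum>i\<in>I. w i * G (r i))"
      using dr by (simp add: Gext_def sum_ereal[symmetric] del: sum_ereal)
    moreover have "G (\<Sum>i\<in>I. w i *\<^sub>R r i) \<le> (\<Sum>i\<in>I. w i * G (r i))"
      using fin sw w r0 by (intro convex_on_sum[OF fin _ Gc]) (auto simp: less_imp_le)
    ultimately show ?thesis by (simp add: Gext_def)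
  qed
qed


lemma pmf_map_sum:
  fixes P :: "'a::finite pmf"
  shows "pmf (map_pmf g P) z = (\<Sum>\<omega>\<in>UNIV. if g \<omega> = z then pmf P \<omega> else 0)"
proof -
  have "g -` {z} = {\<omega>\<in>UNIV. g \<omega> = z}" by auto
  hence "pmf (map_pmf g P) z = sum (pmf P) {\<omega>\<in>UNIV. g \<omega> = z}"
    by (simp add: pmf_map measure_measure_pmf_finite)
  also have "\<dots> = (\<Sum>\<omega>\<in>UNIV. if g \<omega> = z then pmf P \<omega> else 0)"
    by (rule sum.inter_filter) simp
  finally show ?thesis .
qed

lemma sum_UNIV_prod:
  fixes h :: "('a::finite \<times> 'b::finite) \<Rightarrow> 'c::comm_monoid_add"
  shows "(\<Sum>\<omega>\<in>UNIV. h \<omega>) = (\<Sum>a\<in>UNIV. \<Sum>b\<in>UNIV. h (a, b))"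
  by (subst sum.cartesian_product) (simp add: UNIV_Times_UNIV)

lemma ereal_cmult_sum:
  assumes "0 \<le> c"
  shows "ereal c * sum g A = (\<Sum>x\<in>A. ereal c * g x)"
  using sum_distrib_right_ereal[OF assms, of g A] by (simp add: mult.commute)

lemma margU_sum:
  fixes J :: "('u::finite \<times> 'v::finite) pmf"
  shows "pmf (margU J) u = (\<Sum>v\<in>UNIV. pmf J (u, v))"
proof -
  have "(\<Sum>a\<in>UNIV. \<Sum>b\<in>UNIV. if a = u then pmf J (a, b) else 0)
      = (\<Sum>a\<in>UNIV. if a = u then (\<Sum>b\<in>UNIV. pmf J (a, b)) else 0)"
    by (rule sum.cong) auto
  thus ?thesis unfolding margU_def pmf_map_sum sum_UNIV_prod by simp
qed

lemma condV_nonneg: "0 \<le> condV J u v"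
  by (simp add: condV_def)

lemma condV_sum1:
  fixes J :: "('u::finite \<times> 'v::finite) pmf"
  assumes "0 < pmf (margU J) u"
  shows "(\<Sum>v\<in>UNIV. condV J u v) = 1"
  using assms by (simp add: condV_def sum_divide_distrib[symmetric] margU_sum[symmetric])

lemma pmf_sum1: "(\<Sum>v\<in>(UNIV::'v::finite set). pmf q v) = 1"
  by (rule sum_pmf_eq_1) auto

lemma fdiv_channel:
  fixes c q :: "'v::finite \<Rightarrow> real" and K :: "'v \<Rightarrow> 'w::finite \<Rightarrow> real"
  assumes cf: "convex_on {0..} f" and c: "\<And>v. 0 \<le> c v" and q: "\<And>v. 0 \<le> q v"
    and K0: "\<And>v w. 0 \<le> K v w" and K1: "\<And>v. (\<Sum>w\<in>UNIV. K v w) = 1"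
  shows "fdiv f (\<lambda>w. \<Sum>v\<in>UNIV. c v * K v w) (\<lambda>w. \<Sum>v\<in>UNIV. q v * K v w) \<le> fdiv f c q"
proof -
  have "fdiv f (\<lambda>w. \<Sum>v\<in>UNIV. c v * K v w) (\<lambda>w. \<Sum>v\<in>UNIV. q v * K v w)
      \<le> (\<Sum>w\<in>UNIV. \<Sum>v\<in>UNIV. persp f (c v * K v w) (q v * K v w))"
    unfolding fdiv_persp by (intro sum_mono persp_sum[OF cf]) (auto simp: c q K0)
  also have "\<dots> = (\<Sum>w\<in>UNIV. \<Sum>v\<in>UNIV. ereal (K v w) * persp f (c v) (q v))"
    using K0 by (intro sum.cong refl) (simp add: persp_hom[symmetric] mult.commute)
  also have "\<dots> = (\<Sum>v\<in>UNIV. (\<Sum>w\<in>UNIV. ereal (K v w)) * persp f (c v) (q v))"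
    by (subst sum.swap) (simp add: sum_ereal_left_distrib K0 del: sum_ereal)
  also have "\<dots> = fdiv f c q" using K1 by (simp add: fdiv_persp)
  finally show ?thesis .
qed

lemma fdiv_mix:
  fixes c :: "'t \<Rightarrow> 'v::finite \<Rightarrow> real" and q :: "'v \<Rightarrow> real" and l :: "'t \<Rightarrow> real"
  assumes cf: "convex_on {0..} f" and fin: "finite T" and c: "\<And>t v. 0 \<le> c t v" and q: "\<And>v. 0 \<le> q v"
    and l0: "\<And>t. 0 \<le> l t" and l1: "(\<Sum>t\<in>T. l t) = 1"
  shows "fdiv f (\<lambda>v. \<Sum>t\<in>T. l t * c t v) q \<le> (\<Sum>t\<in>T. ereal (l t) * fdiv f (c t) q)"
proof -
  have qv: "q v = (\<Sum>t\<in>T. l t * q v)" for v using l1 by (simp add: sum_distrib_right[symmetric])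
  have "fdiv f (\<lambda>v. \<Sum>t\<in>T. l t * c t v) q
      = (\<Sum>v\<in>UNIV. persp f (\<Sum>t\<in>T. l t * c t v) (\<Sum>t\<in>T. l t * q v))"
    unfolding fdiv_persp by (subst qv) simp
  also have "\<dots> \<le> (\<Sum>v\<in>UNIV. \<Sum>t\<in>T. persp f (l t * c t v) (l t * q v))"
    by (intro sum_mono persp_sum[OF cf fin]) (auto simp: c q l0)
  also have "\<dots> = (\<Sum>v\<in>UNIV. \<Sum>t\<in>T. ereal (l t) * persp f (c t v) (q v))"
    using l0 by (simp add: persp_hom)
  also have "\<dots> = (\<Sum>t\<in>T. ereal (l t) * fdiv f (c t) q)"
    by (subst sum.swap) (simp add: fdiv_persp ereal_cmult_sum l0)
  finally show ?thesis .
qed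


lemma dpiA:
  fixes J1 :: "('u::finite \<times> 'v::finite) pmf" and J2 :: "('u \<times> 'w::finite) pmf"
    and K :: "'v \<Rightarrow> 'w \<Rightarrow> real"
  assumes cf: "convex_on {0..} f" and f1: "f 1 = 0" and Gm: "mono_on {0..} G"
    and K0: "\<And>v w. 0 \<le> K v w" and K1: "\<And>v. (\<Sum>w\<in>UNIV. K v w) = 1"
    and J2eq: "\<And>u w. pmf J2 (u, w) = (\<Sum>v\<in>UNIV. pmf J1 (u, v) * K v w)"
  shows "IGf G f J2 \<le> IGf G f J1"
proof -
  have marg: "pmf (margU J2) u = pmf (margU J1) u" for u
    unfolding margU_sum J2eq by (subst sum.swap) (simp add: sum_distrib_left[symmetric] K1)
  have cond: "condV J2 u w = (\<Sum>v\<in>UNIV. condV J1 u v * K v w)" for u w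
    unfolding condV_def J2eq marg by (simp add: sum_divide_distrib)
  show ?thesis unfolding IGf_def
  proof (rule INF_mono)
    fix q :: "'v pmf"
    define g where "g w = (\<Sum>v\<in>UNIV. pmf q v * K v w)" for w
    have g0: "0 \<le> g w" for w unfolding g_def by (intro sum_nonneg mult_nonneg_nonneg pmf_nonneg K0)
    have gs: "(\<Sum>w\<in>UNIV. g w) = 1" unfolding g_def
      by (subst sum.swap) (simp add: sum_distrib_left[symmetric] K1 pmf_sum1)
    have "(\<integral>\<^sup>+x. ennreal (g x) \<partial>count_space UNIV) = 1"
      using g0 gs by (simp add: nn_integral_count_space_finite sum_ennreal)
    note pe = pmf_embed_pmf[OF g0 this]
    define q' where "q' = embed_pmf g"
    have pq'f: "pmf q' = (\<lambda>w. \<Sum>v\<in>UNIV. pmf q v * K v w)"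
      by (rule ext) (simp add: q'_def pe g_def)
    show "\<exists>n\<in>UNIV. (\<Sum>u\<in>UNIV. ereal (pmf (margU J2) u) * Gext G (fdiv f (condV J2 u) (pmf n)))
        \<le> (\<Sum>u\<in>UNIV. ereal (pmf (margU J1) u) * Gext G (fdiv f (condV J1 u) (pmf q)))"
    proof (intro bexI[of _ q'] sum_mono)
      fix u
      show "ereal (pmf (margU J2) u) * Gext G (fdiv f (condV J2 u) (pmf q'))
          \<le> ereal (pmf (margU J1) u) * Gext G (fdiv f (condV J1 u) (pmf q))"
      proof (cases "pmf (margU J1) u = 0")
        case True thus ?thesis by (simp add: marg zero_ereal_def[symmetric])
      next
        case False
        hence p: "0 < pmf (margU J2) u" using marg pmf_nonneg[of "margU J1" u] by simp
        have c2: "condV J2 u = (\<lambda>w. \<Sum>v\<in>UNIV. condV J1 u v * K v w)" by (rule ext) (rule cond)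
        have le: "fdiv f (condV J2 u) (pmf q') \<le> fdiv f (condV J1 u) (pmf q)"
          unfolding c2 pq'f by (rule fdiv_channel[OF cf condV_nonneg pmf_nonneg K0 K1])
        have z: "0 \<le> fdiv f (condV J2 u) (pmf q')"
          by (rule fdiv_nonneg[OF cf f1 condV_nonneg pmf_nonneg condV_sum1[OF p] pmf_sum1])
        show ?thesis using ereal_mult_left_mono[OF Gext_mono[OF Gm z le], of "ereal (pmf (margU J1) u)"]
          by (simp add: marg)
      qed
    qed simp
  qed
qed

lemma dpiB:
  fixes J1 :: "('t::finite \<times> 'v::finite) pmf" and J2 :: "('u::finite \<times> 'v) pmf"
    and M :: "'u \<Rightarrow> 't \<Rightarrow> real"
  assumes cf: "convex_on {0..} f" and f1: "f 1 = 0" and Gm: "mono_on {0..} G" and Gc: "convex_on {0..} G"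
    and M0: "\<And>u t. 0 \<le> M u t" and M1: "\<And>t. (\<Sum>u\<in>UNIV. M u t) = pmf (margU J1) t"
    and J2eq: "\<And>u v. pmf J2 (u, v) = (\<Sum>t\<in>UNIV. M u t * condV J1 t v)"
  shows "IGf G f J2 \<le> IGf G f J1"
proof -
  have Mz: "M u t = 0" if "pmf (margU J1) t = 0" for u t
  proof -
    have "(\<Sum>u\<in>UNIV. M u t) = 0" using M1 that by simp
    thus ?thesis using M0 by (simp add: sum_nonneg_eq_0_iff)
  qed
  have cs: "M u t * (\<Sum>v\<in>UNIV. condV J1 t v) = M u t" for u t
  proof (cases "pmf (margU J1) t = 0")
    case True thus ?thesis using Mz by simp
  next
    case False
    hence "0 < pmf (margU J1) t" using pmf_nonneg[of "margU J1" t] by simp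
    thus ?thesis using condV_sum1[of J1 t] by simp
  qed
  have marg2: "pmf (margU J2) u = (\<Sum>t\<in>UNIV. M u t)" for u
    unfolding margU_sum J2eq by (subst sum.swap) (simp add: sum_distrib_left[symmetric] cs)
  have key: "ereal (pmf (margU J2) u) * Gext G (fdiv f (condV J2 u) (pmf q))
      \<le> (\<Sum>t\<in>UNIV. ereal (M u t) * Gext G (fdiv f (condV J1 t) (pmf q)))" for u q
  proof (cases "pmf (margU J2) u = 0")
    case True
    hence "M u t = 0" for t using marg2[of u] M0 by (simp add: sum_nonneg_eq_0_iff)
    thus ?thesis using True by (simp add: zero_ereal_def[symmetric])
  next
    case False
    define p where "p = pmf (margU J2) u"
    have p: "0 < p" using False pmf_nonneg[of "margU J2" u] by (simp add: p_def)
    define l where "l t = M u t / p" for t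
    define I where "I = {t. 0 < M u t}"
    define X where "X t = fdiv f (condV J1 t) (pmf q)" for t
    have out: "M u t = 0" if "t \<notin> I" for t using that M0[of u t] by (simp add: I_def)
    have l0: "0 \<le> l t" for t using M0 p by (simp add: l_def)
    have lsum: "(\<Sum>t\<in>I. l t * h t) = (\<Sum>t\<in>UNIV. l t * h t)" for h :: "'t \<Rightarrow> real"
      by (rule sum.mono_neutral_left) (auto simp: l_def out)
    have l1: "(\<Sum>t\<in>I. l t) = 1"
      using lsum[of "\<lambda>_. 1"] p by (simp add: l_def sum_divide_distrib[symmetric] marg2[symmetric] p_def)
    have c2: "condV J2 u = (\<lambda>v. \<Sum>t\<in>I. l t * condV J1 t v)"
    proof (rule ext)
      fix v
      have "condV J2 u v = (\<Sum>t\<in>UNIV. l t * condV J1 t v)"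
        unfolding condV_def[of J2] J2eq p_def[symmetric] l_def sum_divide_distrib by simp
      thus "condV J2 u v = (\<Sum>t\<in>I. l t * condV J1 t v)" using lsum by simp
    qed
    have D2le: "fdiv f (condV J2 u) (pmf q) \<le> (\<Sum>t\<in>I. ereal (l t) * X t)"
      unfolding c2 X_def by (rule fdiv_mix[OF cf finite condV_nonneg pmf_nonneg l0 l1])
    have D2ge: "0 \<le> fdiv f (condV J2 u) (pmf q)"
      by (rule fdiv_nonneg[OF cf f1 condV_nonneg pmf_nonneg condV_sum1 pmf_sum1]) (use p p_def in simp)
    have Xge: "0 \<le> X t" if "t \<in> I" for t
    proof -
      have "pmf (margU J1) t \<noteq> 0" using that Mz by (auto simp: I_def)
      hence "0 < pmf (margU J1) t" using pmf_nonneg[of "margU J1" t] by simp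
      thus ?thesis unfolding X_def
        by (rule fdiv_nonneg[OF cf f1 condV_nonneg pmf_nonneg condV_sum1 pmf_sum1])
    qed
    have "Gext G (fdiv f (condV J2 u) (pmf q)) \<le> Gext G (\<Sum>t\<in>I. ereal (l t) * X t)"
      by (rule Gext_mono[OF Gm D2ge D2le])
    also have "\<dots> \<le> (\<Sum>t\<in>I. ereal (l t) * Gext G (X t))"
      by (rule Gext_jensen[OF Gm Gc finite _ l1 Xge]) (use p in \<open>auto simp: l_def I_def\<close>)
    finally have "ereal p * Gext G (fdiv f (condV J2 u) (pmf q)) \<le> ereal p * (\<Sum>t\<in>I. ereal (l t) * Gext G (X t))"
      using p by (intro ereal_mult_left_mono) auto
    also have "\<dots> = (\<Sum>t\<in>I. ereal (M u t) * Gext G (X t))"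
      using p by (simp add: ereal_cmult_sum mult.assoc[symmetric] l_def)
    also have "\<dots> = (\<Sum>t\<in>UNIV. ereal (M u t) * Gext G (X t))"
      by (rule sum.mono_neutral_left) (auto simp: out)
    finally show ?thesis by (simp add: p_def X_def)
  qed
  show ?thesis unfolding IGf_def
  proof (rule INF_mono)
    fix q :: "'v pmf"
    have "(\<Sum>u\<in>UNIV. ereal (pmf (margU J2) u) * Gext G (fdiv f (condV J2 u) (pmf q)))
        \<le> (\<Sum>u\<in>UNIV. \<Sum>t\<in>UNIV. ereal (M u t) * Gext G (fdiv f (condV J1 t) (pmf q)))"
      by (intro sum_mono key)
    also have "\<dots> = (\<Sum>t\<in>UNIV. (\<Sum>u\<in>UNIV. ereal (M u t)) * Gext G (fdiv f (condV J1 t) (pmf q)))"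
      by (subst sum.swap) (simp add: sum_ereal_left_distrib M0 del: sum_ereal)
    also have "\<dots> = (\<Sum>t\<in>UNIV. ereal (pmf (margU J1) t) * Gext G (fdiv f (condV J1 t) (pmf q)))"
      by (simp add: M1)
    finally show "\<exists>n\<in>UNIV. (\<Sum>u\<in>UNIV. ereal (pmf (margU J2) u) * Gext G (fdiv f (condV J2 u) (pmf n)))
        \<le> (\<Sum>t\<in>UNIV. ereal (pmf (margU J1) t) * Gext G (fdiv f (condV J1 t) (pmf q)))" by blast
  qed
qed


lemma sum_if_out: "(\<Sum>b\<in>A. if P then g b else 0) = (if P then (\<Sum>b\<in>A. g b) else 0)"
  by (cases P) simp_all

lemma if_conj_0: "(if P \<and> Q then F else 0) = (if P then (if Q then F else 0) else 0)"
  by simp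

lemma sum_prod_UNIV_simp:
  fixes h :: "('a::finite \<times> 'b::finite) \<Rightarrow> 'c::comm_monoid_add"
  shows "sum h UNIV = (\<Sum>a\<in>UNIV. \<Sum>b\<in>UNIV. h (a, b))"
  by (rule sum_UNIV_prod)

lemmas marg_simps = pmf_map_sum sum_prod_UNIV_simp if_conj_0 sum_if_out sum.delta sum.delta'



lemma sum2_zero:
  fixes g :: "'a \<Rightarrow> 'b \<Rightarrow> real"
  assumes "finite A" "finite B" "(\<Sum>a\<in>A. \<Sum>b\<in>B. g a b) = 0" "\<And>a b. 0 \<le> g a b" "a \<in> A" "b \<in> B"
  shows "g a b = 0"
proof -
  have "(\<Sum>b\<in>B. g a b) = 0" using assms by (subst (asm) sum_nonneg_eq_0_iff) (auto intro: sum_nonneg)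
  thus ?thesis using assms by (subst (asm) sum_nonneg_eq_0_iff) auto
qed

theorem lemma3:
  fixes P :: "('a::finite \<times> 'x::finite \<times> 'y::finite \<times> 'b::finite) pmf"
    and f G :: "real \<Rightarrow> real"
  assumes markov: "\<And>a x y b.
      pmf P (a, x, y, b) * pmf (map_pmf (\<lambda>(a, x, y, b). x) P) x
                         * pmf (map_pmf (\<lambda>(a, x, y, b). y) P) y
    = pmf (map_pmf (\<lambda>(a, x, y, b). (a, x)) P) (a, x)
      * pmf (map_pmf (\<lambda>(a, x, y, b). (x, y)) P) (x, y)
      * pmf (map_pmf (\<lambda>(a, x, y, b). (y, b)) P) (y, b)"
    and f_convex: "convex_on {0..} f" and f1: "f 1 = 0"
    and G_mono: "mono_on {0..} G" and G_convex: "convex_on {0..} G"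
  shows "IGf G f (map_pmf (\<lambda>(a, x, y, b). (a, b)) P)
         \<le> IGf G f (map_pmf (\<lambda>(a, x, y, b). (x, y)) P)"
proof -
  define p where "p a x y b = pmf P (a, x, y, b)" for a x y b
  have p0: "0 \<le> p a x y b" for a x y b by (simp add: p_def)
  define AX where "AX a x = (\<Sum>y\<in>UNIV. \<Sum>b\<in>UNIV. p a x y b)" for a x
  define XY where "XY x y = (\<Sum>a\<in>UNIV. \<Sum>b\<in>UNIV. p a x y b)" for x y
  define YB where "YB y b = (\<Sum>a\<in>UNIV. \<Sum>x\<in>UNIV. p a x y b)" for y b
  define AXY where "AXY a x y = (\<Sum>b\<in>UNIV. p a x y b)" for a x y
  define AY where "AY a y = (\<Sum>x\<in>UNIV. AXY a x y)" for a y
  define pX where "pX x = (\<Sum>a\<in>UNIV. \<Sum>y\<in>UNIV. AXY a x y)" for x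
  define pY where "pY y = (\<Sum>a\<in>UNIV. \<Sum>x\<in>UNIV. AXY a x y)" for y
  have AXY0: "0 \<le> AXY a x y" for a x y unfolding AXY_def by (intro sum_nonneg p0)
  have XY0: "0 \<le> XY x y" for x y unfolding XY_def by (intro sum_nonneg p0)
  have YB0: "0 \<le> YB y b" for y b unfolding YB_def by (intro sum_nonneg p0)
  have AX0: "0 \<le> AX a x" for a x unfolding AX_def by (intro sum_nonneg p0)
  have AXAXY: "AX a x = (\<Sum>y\<in>UNIV. AXY a x y)" for a x by (simp add: AX_def AXY_def)

  have mX: "pmf (map_pmf (\<lambda>(a, x, y, b). x) P) x = pX x" for x
    by (simp add: marg_simps pX_def AXY_def p_def del: UNIV_Times_UNIV)
  have mY: "pmf (map_pmf (\<lambda>(a, x, y, b). y) P) y = pY y" for y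
    by (simp add: marg_simps pY_def AXY_def p_def del: UNIV_Times_UNIV)
  have mAX: "pmf (map_pmf (\<lambda>(a, x, y, b). (a, x)) P) (a, x) = AX a x" for a x
    by (simp add: marg_simps AX_def p_def del: UNIV_Times_UNIV)
  have mXY: "pmf (map_pmf (\<lambda>(a, x, y, b). (x, y)) P) (x, y) = XY x y" for x y
    by (simp add: marg_simps XY_def p_def del: UNIV_Times_UNIV)
  have mYB: "pmf (map_pmf (\<lambda>(a, x, y, b). (y, b)) P) (y, b) = YB y b" for y b
    by (simp add: marg_simps YB_def p_def del: UNIV_Times_UNIV)
  have mAY: "pmf (map_pmf (\<lambda>(a, x, y, b). (a, y)) P) (a, y) = AY a y" for a y
    by (simp add: marg_simps AY_def AXY_def p_def del: UNIV_Times_UNIV)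
  have mAB: "pmf (map_pmf (\<lambda>(a, x, y, b). (a, b)) P) (a, b) = (\<Sum>y\<in>UNIV. \<Sum>x\<in>UNIV. p a x y b)" for a b
    by (simp add: marg_simps p_def del: UNIV_Times_UNIV) (rule sum.swap)

  have H: "p a x y b * pX x * pY y = AX a x * XY x y * YB y b" for a x y b
    using markov[of a x y b] unfolding mX mY mAX mXY mYB p_def .

  have S1: "(\<Sum>b\<in>UNIV. YB y b) = pY y" for y
  proof -
    have "(\<Sum>b\<in>UNIV. YB y b) = (\<Sum>a\<in>UNIV. \<Sum>b\<in>UNIV. \<Sum>x\<in>UNIV. p a x y b)"
      unfolding YB_def by (rule sum.swap)
    also have "\<dots> = pY y" unfolding pY_def AXY_def
      by (rule sum.cong[OF refl]) (rule sum.swap)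
    finally show ?thesis .
  qed
  have S2: "(\<Sum>x\<in>UNIV. XY x y) = pY y" for y
    unfolding XY_def pY_def AXY_def by (rule sum.swap)
  have S3: "(\<Sum>y\<in>UNIV. XY x y) = pX x" for x
    unfolding XY_def pX_def AXY_def by (rule sum.swap)
  have S4: "(\<Sum>a\<in>UNIV. AX a x) = pX x" for x
    by (simp add: AXAXY pX_def)

  have Z1: "XY x y = 0" if "pY y = 0" for x y
    using that S2[of y] XY0 by (simp add: sum_nonneg_eq_0_iff)
  have Z2: "AXY a x y = 0" if "pY y = 0" for a x y
    by (rule sum2_zero[of UNIV UNIV]) (use that AXY0 in \<open>auto simp: pY_def\<close>)
  have Z3: "AXY a x y = 0" if "pX x = 0" for a x y
    by (rule sum2_zero[of UNIV UNIV]) (use that AXY0 in \<open>auto simp: pX_def\<close>)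
  have Z4: "p a x y b = 0" if "AXY a x y = 0" for a x y b
    using that p0 by (simp add: AXY_def sum_nonneg_eq_0_iff)

  have E1: "AXY a x y * pX x = AX a x * XY x y" for a x y
  proof (cases "pY y = 0")
    case True thus ?thesis using Z1 Z2 by simp
  next
    case False
    have "(\<Sum>b\<in>UNIV. p a x y b * pX x * pY y) = (\<Sum>b\<in>UNIV. AX a x * XY x y * YB y b)"
      using H by simp
    hence "AXY a x y * pX x * pY y = AX a x * XY x y * pY y"
      by (simp add: AXY_def sum_distrib_right[symmetric] sum_distrib_left[symmetric] S1)
    thus ?thesis using False by simp
  qed
  have E2: "p a x y b * pY y = AXY a x y * YB y b" for a x y b
  proof (cases "pX x = 0")
    case True thus ?thesis using Z3 Z4 by simp
  next
    case False
    have "p a x y b * pY y * pX x = AXY a x y * YB y b * pX x"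
      using H[of a x y b] E1[of a x y] by (simp add: algebra_simps)
    thus ?thesis using False by simp
  qed

  define JXY where "JXY = map_pmf (\<lambda>(a, x, y, b). (x, y)) P"
  define JAY where "JAY = map_pmf (\<lambda>(a, x, y, b). (a, y)) P"
  define JAB where "JAB = map_pmf (\<lambda>(a, x, y, b). (a, b)) P"
  have mJXY: "pmf (margU JXY) x = pX x" for x
    by (simp add: margU_sum JXY_def mXY S3)
  have cJXY: "condV JXY x y = XY x y / pX x" for x y
    unfolding condV_def mJXY by (simp add: JXY_def mXY)

  have step1: "IGf G f JAY \<le> IGf G f JXY"
  proof (rule dpiB[OF f_convex f1 G_mono G_convex, where M = AX])
    show "0 \<le> AX u t" for u t by (rule AX0)
    show "(\<Sum>u\<in>UNIV. AX u t) = pmf (margU JXY) t" for t by (simp add: S4 mJXY)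
    show "pmf JAY (u, v) = (\<Sum>t\<in>UNIV. AX u t * condV JXY t v)" for u v
      unfolding JAY_def mAY AY_def cJXY
    proof (rule sum.cong[OF refl])
      fix t
      show "AXY u t v = AX u t * (XY t v / pX t)"
      proof (cases "pX t = 0")
        case True thus ?thesis using Z3 by simp
      next
        case False thus ?thesis using E1[of u t v] by (simp add: field_simps)
      qed
    qed
  qed

  define K where "K y b = (if pY y = 0 then 1 / real CARD('b) else YB y b / pY y)" for y b
  have step2: "IGf G f JAB \<le> IGf G f JAY"
  proof (rule dpiA[OF f_convex f1 G_mono, where K = K])
    have pY0: "0 \<le> pY y" for y unfolding pY_def by (intro sum_nonneg AXY0)
    show "0 \<le> K v w" for v w using YB0[of v w] pY0[of v] by (simp add: K_def)
    show "(\<Sum>w\<in>UNIV. K v w) = 1" for v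
    proof (cases "pY v = 0")
      case True thus ?thesis by (simp add: K_def)
    next
      case False thus ?thesis by (simp add: K_def sum_divide_distrib[symmetric] S1)
    qed
    show "pmf JAB (u, w) = (\<Sum>v\<in>UNIV. pmf JAY (u, v) * K v w)" for u w
      unfolding JAB_def JAY_def mAB mAY
    proof (rule sum.cong[OF refl])
      fix y
      show "(\<Sum>x\<in>UNIV. p u x y w) = AY u y * K y w"
      proof (cases "pY y = 0")
        case True
        have "p u x y w = 0" for x using Z4 Z2 True by blast
        moreover have "AY u y = 0" using Z2 True by (simp add: AY_def)
        ultimately show ?thesis by simp
      next
        case False
        have "(\<Sum>x\<in>UNIV. p u x y w) * pY y = (\<Sum>x\<in>UNIV. AXY u x y) * YB y w"
          by (simp add: sum_distrib_right E2)
        thus ?thesis using False by (simp add: K_def AY_def field_simps)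
      qed
    qed
  qed
  show ?thesis using order_trans[OF step2 step1] by (simp add: JAB_def JXY_def)
qed

end
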